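(* Let $0<p<\infty$ and $\alpha>-1$. Suppose $w\in A^p_\beta$ for some $\beta$ with $-1<\beta<\alpha$, and suppose $\varphi$ is an entire function which is of order less than one, or of order one and type zero. Then the weighted superposition operator $S_{\varphi,w}$ is a bounded operator from the Bloch space $\mathcal B$ into $A^p_\alpha$, i.e. it maps $\mathcal B$ into $A^p_\alpha$ and for every $K>0$ there is a constant $C_K$ such that $\int_{\mathbb D}(1-|z|^2)^\alpha|w(z)|^p|\varphi(f(z))|^p\,dA(z)\le C_K$ for all $f\in\mathcal B$ with $\|f\|_{\mathcal B}\le K$.
   Context: $\mathbb D$ is the unit disc, $\mathcal H(\mathbb D)$ the analytic functions on it. For $\varphi$ entire and $w\in\mathcal H(\mathbb D)$, $S_{\varphi,w}(f)(z)=w(z)\varphi(f(z))$. For $0<p<\infty$, $\gamma>-1$, $A^p_\gamma$ is the set of $f\in\mathcal H(\mathbb D)$ with $\int_{\mathbb D}(1-|z|^2)^\gamma|f(z)|^p\,dA(z)<\infty$, $dA$ normalized area measure. The Bloch space $\mathcal B$ consists of $f\in\mathcal H(\mathbb D)$ with $\|f\|_{\mathcal B}=|f(0)|+\sup_{z\in\mathbb D}(1-|z|^2)|f'(z)|<\infty$. Since the operator is nonlinear, "bounded" means it maps bounded sets to bounded sets. *)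

theory Defs
  imports "HOL-Analysis.Analysis" "HOL-Library.Liminf_Limsup"
begin

abbreviation unit_disc :: "complex set" where
  "unit_disc \<equiv> ball 0 1"

text \<open>Integral of the nonnegative function g against normalized area measure dA = dx dy / pi
  over the unit disc.\<close>
definition dA_integral :: "(complex \<Rightarrow> real) \<Rightarrow> ennreal" where
  "dA_integral g = (\<integral>\<^sup>+ z. ennreal (indicator unit_disc z * g z / pi) \<partial>lborel)"

definition bergman_integral :: "real \<Rightarrow> real \<Rightarrow> (complex \<Rightarrow> complex) \<Rightarrow> ennreal" where
  "bergman_integral p \<gamma> f = dA_integral (\<lambda>z. (1 - (cmod z)\<^sup>2) powr \<gamma> * cmod (f z) powr p)"

definition weighted_bergman :: "real \<Rightarrow> real \<Rightarrow> (complex \<Rightarrow> complex) set" where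
  "weighted_bergman p \<gamma> = {f. f holomorphic_on unit_disc \<and> bergman_integral p \<gamma> f < \<infinity>}"

definition bloch_space :: "(complex \<Rightarrow> complex) set" where
  "bloch_space = {f. f holomorphic_on unit_disc \<and>
      bdd_above ((\<lambda>z. (1 - (cmod z)\<^sup>2) * cmod (deriv f z)) ` unit_disc)}"

definition bloch_norm :: "(complex \<Rightarrow> complex) \<Rightarrow> real" where
  "bloch_norm f = cmod (f 0) + (SUP z\<in>unit_disc. (1 - (cmod z)\<^sup>2) * cmod (deriv f z))"

definition superpos :: "(complex \<Rightarrow> complex) \<Rightarrow> (complex \<Rightarrow> complex) \<Rightarrow> (complex \<Rightarrow> complex)
    \<Rightarrow> (complex \<Rightarrow> complex)" where
  "superpos \<phi> w f = (\<lambda>z. w z * \<phi> (f z))"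

definition max_modulus :: "(complex \<Rightarrow> complex) \<Rightarrow> real \<Rightarrow> real" where
  "max_modulus \<phi> r = Sup ((\<lambda>z. cmod (\<phi> z)) ` sphere 0 r)"

text \<open>Order of an entire function: limsup_{r\<rightarrow>\<infinity>} log log M(r) / log r.
  (M(r) is replaced by max(M(r), e), which changes nothing for nonconstant functions
  and gives order 0 for constants, the usual convention.)\<close>
definition entire_order :: "(complex \<Rightarrow> complex) \<Rightarrow> ereal" where
  "entire_order \<phi> = Limsup at_top
     (\<lambda>r::real. ereal (ln (ln (max (max_modulus \<phi> r) (exp 1))) / ln r))"

definition entire_type :: "(complex \<Rightarrow> complex) \<Rightarrow> real \<Rightarrow> ereal" where
  "entire_type \<phi> \<rho> = Limsup at_top
     (\<lambda>r::real. ereal (ln (max (max_modulus \<phi> r) 1) / r powr \<rho>))"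

end

theory Submission
  imports Defs
begin


lemma bloch_growth:
  fixes f :: "complex \<Rightarrow> complex" and S :: real
  assumes hol: "f holomorphic_on unit_disc"
    and bnd: "\<And>u. u \<in> unit_disc \<Longrightarrow> (1 - (cmod u)\<^sup>2) * cmod (deriv f u) \<le> S"
    and z: "z \<in> unit_disc"
  shows "cmod (f z - f 0) \<le> S * (- ln (1 - cmod z))"
proof -
  have z1: "cmod z < 1" using z by simp
  have S0: "0 \<le> S" using bnd[of 0] by (auto intro: order_trans[rotated])
  define g where "g = (\<lambda>t::real. f (of_real t * z))"
  have mem: "of_real t * z \<in> unit_disc" if "0 \<le> t" "t \<le> 1" for t
  proof -
    have "cmod (of_real t * z) = t * cmod z" using that by (simp add: norm_mult)
    also have "\<dots> \<le> cmod z" using that by (simp add: mult_left_le_one_le)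
    finally show ?thesis using z1 by simp
  qed
  have "continuous_on {0..1} g"
    unfolding g_def
    apply (rule continuous_on_compose2[OF holomorphic_on_imp_continuous_on[OF hol]])
    using mem by (auto intro!: continuous_intros)
  moreover have "continuous_on {0..1} (\<lambda>t. - S * ln (1 - t * cmod z))"
  proof -
    have "\<forall>t\<in>{0..1}. 0 < 1 - t * cmod z"
    proof
      fix t :: real assume "t \<in> {0..1}"
      then have "t * cmod z \<le> cmod z" by (simp add: mult_left_le_one_le)
      then show "0 < 1 - t * cmod z" using z1 by simp
    qed
    then show ?thesis by (auto intro!: continuous_intros)
  qed
  moreover have "(g has_vector_derivative (z * deriv f (of_real t * z))) (at t)"
    if "0 < t" "t < 1" for t
  proof -
    have "(f has_field_derivative deriv f (of_real t * z)) (at (of_real t * z))"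
      using mem[of t] that hol by (auto intro!: holomorphic_derivI[where S=unit_disc])
    moreover have "((\<lambda>t::real. of_real t * z) has_vector_derivative z) (at t)"
      by (auto intro!: derivative_eq_intros)
    ultimately show ?thesis
      unfolding g_def using field_vector_diff_chain_at[of "\<lambda>t::real. of_real t * z" z t f]
      by (simp add: o_def)
  qed
  moreover have "((\<lambda>t. - S * ln (1 - t * cmod z)) has_vector_derivative (S * cmod z / (1 - t * cmod z))) (at t)"
    if "0 < t" "t < 1" for t
  proof -
    have "t * cmod z \<le> cmod z" using that by (simp add: mult_left_le_one_le)
    then have "0 < 1 - t * cmod z" using z1 by simp
    then show ?thesis
      unfolding has_real_derivative_iff_has_vector_derivative[symmetric]
      by (auto intro!: derivative_eq_intros simp: field_simps)
  qed
  moreover have "cmod (z * deriv f (of_real t * z)) \<le> S * cmod z / (1 - t * cmod z)"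
    if "0 < t" "t < 1" for t
  proof -
    have tz: "t * cmod z \<le> cmod z" using that by (simp add: mult_left_le_one_le)
    then have pos: "0 < 1 - t * cmod z" using z1 by simp
    have n: "cmod (of_real t * z) = t * cmod z" using that by (simp add: norm_mult)
    have "(1 - (t * cmod z)\<^sup>2) * cmod (deriv f (of_real t * z)) \<le> S"
      using bnd[OF mem[of t]] that n by simp
    moreover have "1 - t * cmod z \<le> 1 - (t * cmod z)\<^sup>2"
    proof -
      have "t * cmod z * (t * cmod z) \<le> t * cmod z"
        by (rule mult_right_le_one_le) (use tz z1 that in auto)
      then show ?thesis by (simp add: power2_eq_square)
    qed
    ultimately have "(1 - t * cmod z) * cmod (deriv f (of_real t * z)) \<le> S"
      by (meson mult_right_mono norm_ge_zero order_trans)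
    then have "cmod (deriv f (of_real t * z)) \<le> S / (1 - t * cmod z)"
      using pos by (simp add: field_simps)
    then have "cmod z * cmod (deriv f (of_real t * z)) \<le> cmod z * (S / (1 - t * cmod z))"
      by (rule mult_left_mono) simp_all
    then show ?thesis by (simp add: norm_mult mult.commute)
  qed
  ultimately have "norm (g 1 - g 0) \<le> (- S * ln (1 - 1 * cmod z)) - (- S * ln (1 - 0 * cmod z))"
    by (intro differentiable_bound_general[OF zero_less_one]) auto
  then show ?thesis unfolding g_def by simp
qed


lemma le_max_modulus:
  assumes "\<phi> holomorphic_on UNIV"
  shows "cmod (\<phi> u) \<le> max_modulus \<phi> (cmod u)"
proof -
  have "continuous_on UNIV \<phi>" using assms holomorphic_on_imp_continuous_on by blast
  then have "compact ((\<lambda>z. cmod (\<phi> z)) ` sphere 0 (cmod u))"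
    by (intro compact_continuous_image) (auto intro!: continuous_intros intro: continuous_on_subset)
  then have "bdd_above ((\<lambda>z. cmod (\<phi> z)) ` sphere 0 (cmod u))"
    by (simp add: bounded_imp_bdd_above compact_imp_bounded)
  then show ?thesis unfolding max_modulus_def
    by (intro cSUP_upper) auto
qed

lemma growth:
  fixes \<phi> :: "complex \<Rightarrow> complex"
  assumes ord: "entire_order \<phi> < 1 \<or> (entire_order \<phi> = 1 \<and> entire_type \<phi> 1 = 0)"
    and e: "\<epsilon> > 0"
  shows "\<exists>s0\<ge>0. \<forall>s\<ge>s0. max_modulus \<phi> s \<le> exp (\<epsilon> * s)"
proof -
  have ev: "eventually (\<lambda>s. max_modulus \<phi> s \<le> exp (\<epsilon> * s)) at_top"
    using ord
  proof
    assume o: "entire_order \<phi> < 1"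
    obtain \<sigma> :: real where s1': "entire_order \<phi> < ereal \<sigma>" "ereal \<sigma> < 1"
      using ereal_dense2[OF o] by blast
    have s1: "entire_order \<phi> < ereal \<sigma>" "\<sigma> < 1" using s1' by simp_all
    have e1: "eventually (\<lambda>r. ereal (ln (ln (max (max_modulus \<phi> r) (exp 1))) / ln r) < ereal \<sigma>) at_top"
      using Limsup_lessD[OF s1(1)[unfolded entire_order_def]] by simp
    have "((\<lambda>r::real. r powr (\<sigma> - 1)) \<longlongrightarrow> 0) at_top"
      using s1(2) by (intro tendsto_neg_powr filterlim_ident) auto
    then have e2: "eventually (\<lambda>r::real. r powr (\<sigma> - 1) < \<epsilon>) at_top"
      using e by (simp add: order_tendstoD(2))
    show ?thesis
      using e1 e2 eventually_gt_at_top[of 1]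
    proof eventually_elim
      case (elim r)
      let ?m = "max (max_modulus \<phi> r) (exp 1)"
      have lr: "ln r > 0" using elim by simp
      have m1: "?m \<ge> exp 1" by simp
      have mpos: "?m > 0" by (rule less_le_trans[OF exp_gt_zero m1])
      have "ln (exp 1) \<le> ln ?m" using m1 mpos by (subst ln_le_cancel_iff) auto
      then have lm: "ln ?m \<ge> 1" by simp
      have "ln (ln ?m) < \<sigma> * ln r" using elim(1) lr by (simp add: divide_less_eq)
      then have "exp (ln (ln ?m)) < exp (\<sigma> * ln r)" by simp
      then have "ln ?m < exp (\<sigma> * ln r)" using lm by simp
      also have "exp (\<sigma> * ln r) = r powr \<sigma>" using elim by (simp add: powr_def)
      also have "r powr \<sigma> = r * r powr (\<sigma> - 1)" using elim by (simp add: powr_diff)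
      also have "\<dots> \<le> r * \<epsilon>" using elim by (intro mult_left_mono) auto
      also have "\<dots> = \<epsilon> * r" by simp
      finally have "ln ?m < \<epsilon> * r" .
      then have "exp (ln ?m) < exp (\<epsilon> * r)" by simp
      then have "?m < exp (\<epsilon> * r)" using mpos by simp
      then show ?case by simp
    qed
  next
    assume o: "entire_order \<phi> = 1 \<and> entire_type \<phi> 1 = 0"
    then have "entire_type \<phi> 1 < ereal \<epsilon>" using e by simp
    then have e1: "eventually (\<lambda>r. ereal (ln (max (max_modulus \<phi> r) 1) / r powr 1) < ereal \<epsilon>) at_top"
      unfolding entire_type_def using Limsup_lessD by blast
    show ?thesis
      using e1 eventually_gt_at_top[of 0]
    proof eventually_elim
      case (elim r)
      then have "ln (max (max_modulus \<phi> r) 1) < \<epsilon> * r"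
        by (simp add: divide_less_eq mult.commute)
      then have "exp (ln (max (max_modulus \<phi> r) 1)) < exp (\<epsilon> * r)" by (simp only: exp_less_cancel_iff)
      moreover have "exp (ln (max (max_modulus \<phi> r) 1)) = max (max_modulus \<phi> r) 1" by simp
      ultimately have "max (max_modulus \<phi> r) 1 < exp (\<epsilon> * r)" by linarith
      then show ?case by simp
    qed
  qed
  then obtain s1 where "\<forall>s\<ge>s1. max_modulus \<phi> s \<le> exp (\<epsilon> * s)"
    by (auto simp: eventually_at_top_linorder)
  then show ?thesis by (intro exI[of _ "max s1 0"]) auto
qed

lemma phi_bound:
  fixes \<phi> :: "complex \<Rightarrow> complex"
  assumes hol: "\<phi> holomorphic_on UNIV"
    and ord: "entire_order \<phi> < 1 \<or> (entire_order \<phi> = 1 \<and> entire_type \<phi> 1 = 0)"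
    and e: "\<epsilon> > 0"
  shows "\<exists>B\<ge>0. \<forall>u. cmod (\<phi> u) \<le> B + exp (\<epsilon> * cmod u)"
proof -
  obtain s0 where s0: "s0 \<ge> 0" "\<forall>s\<ge>s0. max_modulus \<phi> s \<le> exp (\<epsilon> * s)"
    using growth[OF ord e] by blast
  have "continuous_on UNIV \<phi>" using hol holomorphic_on_imp_continuous_on by blast
  then have "compact (\<phi> ` cball 0 s0)"
    by (intro compact_continuous_image) (auto intro: continuous_on_subset)
  then obtain B where B: "B > 0" "\<forall>x\<in>\<phi> ` cball 0 s0. norm x \<le> B"
    using compact_imp_bounded bounded_pos by blast
  show ?thesis
  proof (intro exI[of _ B] conjI allI)
    fix u
    show "cmod (\<phi> u) \<le> B + exp (\<epsilon> * cmod u)"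
    proof (cases "cmod u \<le> s0")
      case True
      then have "cmod (\<phi> u) \<le> B" using B by auto
      then show ?thesis by (smt (verit) exp_gt_zero)
    next
      case False
      then have "cmod (\<phi> u) \<le> exp (\<epsilon> * cmod u)"
        using le_max_modulus[OF hol, of u] s0(2)[rule_format, of "cmod u"] False by linarith
      then show ?thesis using B by simp
    qed
  qed (use B in simp)
qed


lemma real_core:
  fixes t W Phi B \<delta> p \<alpha> \<beta> :: real
  assumes t0: "0 \<le> t" and t1: "t < 1" and W0: "W \<ge> 0" and p0: "p > 0" and ab: "\<beta> < \<alpha>"
    and dlt: "\<delta> = (\<alpha> - \<beta>) / p" and B0: "B \<ge> 0" and Phi0: "0 \<le> Phi"
    and hPhi: "Phi \<le> B + exp \<delta> * (1 - t) powr (- \<delta>)"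
  shows "(1 - t\<^sup>2) powr \<alpha> * (W * Phi powr p)
     \<le> (2 powr p * (B powr p + exp (\<delta> * p) * 2 powr (\<alpha> - \<beta>))) * ((1 - t\<^sup>2) powr \<beta> * W)"
proof -
  define E where "E = exp \<delta> * (1 - t) powr (- \<delta>)"
  define A where "A = 1 - t\<^sup>2"
  have E0: "E \<ge> 0" unfolding E_def by simp
  have A0: "A > 0" unfolding A_def using t0 t1 by (simp add: power_less_one_iff abs_square_less_1)
  have A1: "A \<le> 1" unfolding A_def by simp
  have A_eq: "A = (1 - t) * (1 + t)" unfolding A_def by (simp add: power2_eq_square algebra_simps)
  have dp: "\<delta> * p = \<alpha> - \<beta>" using dlt p0 by simp
  have "Phi powr p \<le> (B + E) powr p"
    using Phi0 hPhi p0 unfolding E_def by (intro powr_mono2) auto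
  also have "\<dots> \<le> (2 * max B E) powr p"
    using B0 E0 p0 by (intro powr_mono2) auto
  also have "\<dots> = 2 powr p * max B E powr p"
    using B0 E0 by (simp add: powr_mult)
  also have "max B E powr p \<le> B powr p + E powr p"
    by (simp add: max_def)
  also have "E powr p = exp (\<delta> * p) * (1 - t) powr (- (\<alpha> - \<beta>))"
    unfolding E_def using t1 dp
    by (simp add: powr_mult exp_powr_real powr_powr)
  finally have hP: "Phi powr p \<le> 2 powr p * (B powr p + exp (\<delta> * p) * (1 - t) powr (- (\<alpha> - \<beta>)))"
    by simp
  have k1: "A powr \<alpha> \<le> A powr \<beta>"
    using A0 A1 ab by (intro powr_mono') auto
  have "A powr \<alpha> * (1 - t) powr (- (\<alpha> - \<beta>)) = A powr \<beta> * (A powr (\<alpha> - \<beta>) * (1 - t) powr (- (\<alpha> - \<beta>)))"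
    using A0 by (simp add: powr_diff field_simps)
  also have "A powr (\<alpha> - \<beta>) * (1 - t) powr (- (\<alpha> - \<beta>)) = (1 + t) powr (\<alpha> - \<beta>)"
  proof -
    have "(1 - t) powr (\<alpha> - \<beta>) * (1 - t) powr (- (\<alpha> - \<beta>)) = 1"
      using t1 by (simp add: powr_add[symmetric])
    moreover have "A powr (\<alpha> - \<beta>) = (1 - t) powr (\<alpha> - \<beta>) * (1 + t) powr (\<alpha> - \<beta>)"
      unfolding A_eq using t0 t1 by (simp add: powr_mult)
    ultimately show ?thesis by (metis mult.commute mult.left_commute mult_1_right)
  qed
  also have "(1 + t) powr (\<alpha> - \<beta>) \<le> 2 powr (\<alpha> - \<beta>)"
    using t0 t1 ab by (intro powr_mono2) auto
  finally have k2: "A powr \<alpha> * (1 - t) powr (- (\<alpha> - \<beta>)) \<le> A powr \<beta> * 2 powr (\<alpha> - \<beta>)"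
    using A0 by (simp add: mult_left_mono)
  have "A powr \<alpha> * (W * Phi powr p) \<le> A powr \<alpha> * (W * (2 powr p * (B powr p + exp (\<delta> * p) * (1 - t) powr (- (\<alpha> - \<beta>)))))"
    using hP W0 by (intro mult_left_mono) auto
  also have "\<dots> = 2 powr p * W * (B powr p * A powr \<alpha> + exp (\<delta> * p) * (A powr \<alpha> * (1 - t) powr (- (\<alpha> - \<beta>))))"
    by (simp add: algebra_simps)
  also have "\<dots> \<le> 2 powr p * W * (B powr p * A powr \<beta> + exp (\<delta> * p) * (A powr \<beta> * 2 powr (\<alpha> - \<beta>)))"
    using k1 k2 W0 by (intro mult_left_mono add_mono) auto
  also have "\<dots> = (2 powr p * (B powr p + exp (\<delta> * p) * 2 powr (\<alpha> - \<beta>))) * (A powr \<beta> * W)"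
    by (simp add: algebra_simps)
  finally show ?thesis unfolding A_def .
qed

lemma f_bound:
  assumes f: "f \<in> bloch_space" and K: "bloch_norm f \<le> K" and z: "z \<in> unit_disc"
  shows "cmod (f z) \<le> K + K * (- ln (1 - cmod z))"
proof -
  define S where "S = (SUP z\<in>unit_disc. (1 - (cmod z)\<^sup>2) * cmod (deriv f z))"
  have hol: "f holomorphic_on unit_disc" and bdd: "bdd_above ((\<lambda>z. (1 - (cmod z)\<^sup>2) * cmod (deriv f z)) ` unit_disc)"
    using f unfolding bloch_space_def by auto
  have up: "(1 - (cmod u)\<^sup>2) * cmod (deriv f u) \<le> S" if "u \<in> unit_disc" for u
    unfolding S_def using bdd that by (rule cSUP_upper2) auto
  have S0: "0 \<le> S" using up[of 0] by (auto intro: order_trans[rotated])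
  have KS: "cmod (f 0) + S \<le> K" using K unfolding bloch_norm_def S_def by simp
  have z1: "cmod z < 1" using z by simp
  have L0: "0 \<le> - ln (1 - cmod z)" using z1 by simp
  have "cmod (f z) \<le> cmod (f 0) + cmod (f z - f 0)"
    by (metis add.commute diff_add_cancel norm_triangle_ineq)
  also have "cmod (f z - f 0) \<le> S * (- ln (1 - cmod z))"
    by (rule bloch_growth[OF hol up z])
  also have "S * (- ln (1 - cmod z)) \<le> K * (- ln (1 - cmod z))"
  proof -
    have SK: "S \<le> K" using KS norm_ge_zero[of "f 0"] by linarith
    show ?thesis using SK L0 by (rule mult_right_mono)
  qed
  finally show ?thesis using KS S0 norm_ge_zero[of "f 0"] by linarith
qed

lemma bloch_norm_nonneg:
  assumes f: "f \<in> bloch_space"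
  shows "0 \<le> bloch_norm f"
proof -
  have bdd: "bdd_above ((\<lambda>z. (1 - (cmod z)\<^sup>2) * cmod (deriv f z)) ` unit_disc)"
    using f unfolding bloch_space_def by auto
  have "0 \<le> (SUP z\<in>unit_disc. (1 - (cmod z)\<^sup>2) * cmod (deriv f z))"
    using bdd by (rule cSUP_upper2[where x=0]) auto
  then show ?thesis unfolding bloch_norm_def by simp
qed

lemma main_bound:
  fixes p \<alpha> \<beta> :: real and \<phi> w :: "complex \<Rightarrow> complex"
  assumes p0: "0 < p" and ab: "\<beta> < \<alpha>" and wB: "w \<in> weighted_bergman p \<beta>"
    and hol: "\<phi> holomorphic_on UNIV"
    and ord: "entire_order \<phi> < 1 \<or> (entire_order \<phi> = 1 \<and> entire_type \<phi> 1 = 0)"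
    and K0: "K > 0"
  shows "\<exists>C::real. \<forall>f\<in>bloch_space. bloch_norm f \<le> K \<longrightarrow>
             bergman_integral p \<alpha> (superpos \<phi> w f) \<le> ennreal C"
proof -
  define \<delta> where "\<delta> = (\<alpha> - \<beta>) / p"
  have d0: "\<delta> > 0" unfolding \<delta>_def using p0 ab by simp
  obtain B where B0: "B \<ge> 0" and hB: "\<And>u. cmod (\<phi> u) \<le> B + exp (\<delta> / K * cmod u)"
    using phi_bound[OF hol ord, of "\<delta> / K"] d0 K0 by auto
  define C0 where "C0 = 2 powr p * (B powr p + exp (\<delta> * p) * 2 powr (\<alpha> - \<beta>))"
  have C00: "C0 \<ge> 0" unfolding C0_def by simp
  define g where "g = (\<lambda>z. (1 - (cmod z)\<^sup>2) powr \<beta> * cmod (w z) powr p)"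
  define I where "I = bergman_integral p \<beta> w"
  have wh: "w holomorphic_on unit_disc" and Ifin: "I < \<infinity>"
    using wB unfolding weighted_bergman_def I_def by auto
  define w' where "w' = (\<lambda>z. indicator unit_disc z *\<^sub>R w z)"
  have w'm: "w' \<in> borel_measurable borel"
    unfolding w'_def using holomorphic_on_imp_continuous_on[OF wh]
    by (intro borel_measurable_continuous_on_indicator) auto
  have geq: "(\<lambda>z. ennreal (indicator unit_disc z * g z / pi)) =
      (\<lambda>z. ennreal (indicator unit_disc z * ((1 - (cmod z)\<^sup>2) powr \<beta> * cmod (w' z) powr p) / pi))"
    unfolding g_def w'_def by (auto simp: indicator_def fun_eq_iff)
  have gm: "(\<lambda>z. ennreal (indicator unit_disc z * g z / pi)) \<in> borel_measurable lborel"
  proof -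
    note w'm[measurable]
    have [measurable]: "unit_disc \<in> sets borel" by simp
    show ?thesis unfolding geq measurable_lborel1 by measurable
  qed
  show ?thesis
  proof (intro exI[of _ "C0 * enn2real I"] ballI impI)
    fix f assume f: "f \<in> bloch_space" and fK: "bloch_norm f \<le> K"
    have pw: "ennreal (indicator unit_disc z * ((1 - (cmod z)\<^sup>2) powr \<alpha> * cmod (superpos \<phi> w f z) powr p) / pi)
        \<le> ennreal C0 * ennreal (indicator unit_disc z * g z / pi)" for z
    proof (cases "z \<in> unit_disc")
      case False then show ?thesis by simp
    next
      case True
      define t where "t = cmod z"
      have t0: "0 \<le> t" and t1: "t < 1" using True unfolding t_def by auto
      have fz: "cmod (f z) \<le> K + K * (- ln (1 - t))"
        using f_bound[OF f fK True] unfolding t_def .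
      have "cmod (\<phi> (f z)) \<le> B + exp (\<delta> / K * cmod (f z))" by (rule hB)
      also have "exp (\<delta> / K * cmod (f z)) \<le> exp (\<delta> / K * (K + K * (- ln (1 - t))))"
        using fz d0 K0 by (intro iffD2[OF exp_le_cancel_iff] mult_left_mono) auto
      also have "\<delta> / K * (K + K * (- ln (1 - t))) = \<delta> + (- \<delta>) * ln (1 - t)"
        using K0 by (simp add: field_simps)
      also have "exp (\<delta> + (- \<delta>) * ln (1 - t)) = exp \<delta> * (1 - t) powr (- \<delta>)"
        using t1 by (simp add: powr_def exp_add[symmetric])
      finally have hP: "cmod (\<phi> (f z)) \<le> B + exp \<delta> * (1 - t) powr (- \<delta>)" by simp
      have core: "(1 - t\<^sup>2) powr \<alpha> * (cmod (w z) powr p * cmod (\<phi> (f z)) powr p)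
          \<le> C0 * ((1 - t\<^sup>2) powr \<beta> * cmod (w z) powr p)"
        unfolding C0_def
        by (rule real_core[OF t0 t1 _ p0 ab \<delta>_def B0 _ hP]) auto
      have eq: "cmod (superpos \<phi> w f z) powr p = cmod (w z) powr p * cmod (\<phi> (f z)) powr p"
        unfolding superpos_def by (simp add: norm_mult powr_mult)
      have "indicator unit_disc z * ((1 - (cmod z)\<^sup>2) powr \<alpha> * cmod (superpos \<phi> w f z) powr p) / pi
          \<le> C0 * (indicator unit_disc z * g z / pi)"
        using core True unfolding eq g_def t_def by (simp add: divide_right_mono)
      then have "ennreal (indicator unit_disc z * ((1 - (cmod z)\<^sup>2) powr \<alpha> * cmod (superpos \<phi> w f z) powr p) / pi)
          \<le> ennreal (C0 * (indicator unit_disc z * g z / pi))"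
        by (rule ennreal_leI)
      also have "\<dots> = ennreal C0 * ennreal (indicator unit_disc z * g z / pi)"
        using C00 by (rule ennreal_mult')
      finally show ?thesis .
    qed
    have "bergman_integral p \<alpha> (superpos \<phi> w f)
        \<le> (\<integral>\<^sup>+ z. ennreal C0 * ennreal (indicator unit_disc z * g z / pi) \<partial>lborel)"
      unfolding bergman_integral_def dA_integral_def by (intro nn_integral_mono pw)
    also have "\<dots> = ennreal C0 * I"
      unfolding I_def bergman_integral_def dA_integral_def g_def[symmetric]
      using gm by (simp add: nn_integral_cmult)
    also have "\<dots> = ennreal (C0 * enn2real I)"
      using Ifin C00 by (simp add: ennreal_mult ennreal_enn2real)
    finally show "bergman_integral p \<alpha> (superpos \<phi> w f) \<le> ennreal (C0 * enn2real I)" .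
  qed
qed

theorem theorem2:
  fixes p \<alpha> \<beta> :: real and \<phi> w :: "complex \<Rightarrow> complex"
  assumes "0 < p" and "\<alpha> > -1"
    and "-1 < \<beta>" and "\<beta> < \<alpha>" and "w \<in> weighted_bergman p \<beta>"
    and "\<phi> holomorphic_on UNIV"
    and "entire_order \<phi> < 1 \<or> (entire_order \<phi> = 1 \<and> entire_type \<phi> 1 = 0)"
  shows "(\<forall>f\<in>bloch_space. superpos \<phi> w f \<in> weighted_bergman p \<alpha>) \<and>
         (\<forall>K>0. \<exists>C::real. \<forall>f\<in>bloch_space. bloch_norm f \<le> K \<longrightarrow>
             bergman_integral p \<alpha> (superpos \<phi> w f) \<le> ennreal C)"
proof (intro conjI ballI allI impI)
  fix K :: real assume "K > 0"
  then show "\<exists>C::real. \<forall>f\<in>bloch_space. bloch_norm f \<le> K \<longrightarrow>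
             bergman_integral p \<alpha> (superpos \<phi> w f) \<le> ennreal C"
    using main_bound assms by blast
next
  fix f assume f: "f \<in> bloch_space"
  have K0: "bloch_norm f + 1 > 0" using bloch_norm_nonneg[OF f] by simp
  obtain C :: real where C: "\<forall>g\<in>bloch_space. bloch_norm g \<le> bloch_norm f + 1 \<longrightarrow>
             bergman_integral p \<alpha> (superpos \<phi> w g) \<le> ennreal C"
    using main_bound[OF assms(1,4,5,6,7) K0] by blast
  have "bergman_integral p \<alpha> (superpos \<phi> w f) \<le> ennreal C" using C f by simp
  also have "\<dots> < \<infinity>" by simp
  finally have fin: "bergman_integral p \<alpha> (superpos \<phi> w f) < \<infinity>" .
  have "w holomorphic_on unit_disc" using assms(5) unfolding weighted_bergman_def by auto
  moreover have "f holomorphic_on unit_disc" using f unfolding bloch_space_def by auto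
  moreover have "(\<phi> \<circ> f) holomorphic_on unit_disc"
    by (rule holomorphic_on_compose_gen[OF _ assms(6)]) (use f in \<open>auto simp: bloch_space_def\<close>)
  ultimately have "superpos \<phi> w f holomorphic_on unit_disc"
    unfolding superpos_def by (simp add: o_def holomorphic_on_mult)
  then show "superpos \<phi> w f \<in> weighted_bergman p \<alpha>"
    using fin unfolding weighted_bergman_def by auto
qed

end
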